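(* Fix $I_{12},I_{23},I_{31}\in[0,\infty)$. For $(u_1,u_2,u_3)\in\mathcal{U}_H^{123}$, let $\alpha_1,\alpha_2,\alpha_3$ be the inner angles, opposite to sides $l_1,l_2,l_3$ respectively, of the hyperbolic triangle with side lengths $l_1,l_2,l_3$. Then the Jacobian matrix $\left(\partial\alpha_i/\partial u_j\right)_{i,j=1}^3$ is negative definite at every point of $\mathcal{U}_H^{123}$.
   Context: Put $u_i=\ln\tanh(r_i/2)$ with $r_i>0$ for $i=1,2,3$. Let $l_1,l_2,l_3>0$ be given by $$\cosh l_1=\cosh r_2\cosh r_3+I_{23}\sinh r_2\sinh r_3,$$ $$\cosh l_2=\cosh r_3\cosh r_1+I_{31}\sinh r_3\sinh r_1,$$ $$\cosh l_3=\cosh r_1\cosh r_2+I_{12}\sinh r_1\sinh r_2.$$ The set $\mathcal{U}_H^{123}\subset(-\infty,0)^3$ is the set of $(u_1,u_2,u_3)$ for which $l_1,l_2,l_3$ satisfy the strict triangle inequalities. The Jacobian matrix $\left(\partial\alpha_i/\partial u_j\right)$ is symmetric. *)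

theory Defs
  imports "HOL-Analysis.Analysis"
begin

text \<open>Radius from the coordinate u = ln tanh(r/2), i.e. r = 2 artanh(e^u) (for u < 0).\<close>
definition radius :: "real \<Rightarrow> real" where
  "radius u = 2 * artanh (exp u)"

definition side_len :: "real \<Rightarrow> real \<Rightarrow> real \<Rightarrow> real" where
  "side_len I ra rb = arcosh (cosh ra * cosh rb + I * sinh ra * sinh rb)"

definition lengths :: "real \<Rightarrow> real \<Rightarrow> real \<Rightarrow> real^3 \<Rightarrow> real^3" where
  "lengths I12 I23 I31 u =
     vector [side_len I23 (radius (u$2)) (radius (u$3)),
             side_len I31 (radius (u$3)) (radius (u$1)),
             side_len I12 (radius (u$1)) (radius (u$2))]"

text \<open>Inner angle opposite to side a in the hyperbolic triangle with sides a, b, c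
  (hyperbolic law of cosines).\<close>
definition hyp_angle :: "real \<Rightarrow> real \<Rightarrow> real \<Rightarrow> real" where
  "hyp_angle a b c = arccos ((cosh b * cosh c - cosh a) / (sinh b * sinh c))"

definition angles :: "real \<Rightarrow> real \<Rightarrow> real \<Rightarrow> real^3 \<Rightarrow> real^3" where
  "angles I12 I23 I31 u =
     (let l = lengths I12 I23 I31 u in
       vector [hyp_angle (l$1) (l$2) (l$3),
               hyp_angle (l$2) (l$3) (l$1),
               hyp_angle (l$3) (l$1) (l$2)])"

definition U_H :: "real \<Rightarrow> real \<Rightarrow> real \<Rightarrow> (real^3) set" where
  "U_H I12 I23 I31 = {u. u$1 < 0 \<and> u$2 < 0 \<and> u$3 < 0 \<and>
     (let l = lengths I12 I23 I31 u in
        l$1 < l$2 + l$3 \<and> l$2 < l$3 + l$1 \<and> l$3 < l$1 + l$2)}"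

definition neg_definite :: "real^'n^'n \<Rightarrow> bool" where
  "neg_definite A \<longleftrightarrow> (\<forall>x. x \<noteq> 0 \<longrightarrow> x \<bullet> (A *v x) < 0)"

end

theory Submission
  imports Defs
begin



definition det3 :: "real \<Rightarrow> real \<Rightarrow> real \<Rightarrow> real \<Rightarrow> real \<Rightarrow> real \<Rightarrow> real \<Rightarrow> real \<Rightarrow> real \<Rightarrow> real" where
  "det3 a11 a12 a13 a21 a22 a23 a31 a32 a33 =
     a11*(a22*a33 - a23*a32) - a12*(a21*a33 - a23*a31) + a13*(a21*a32 - a22*a31)"

lemma det3_scale:
  "det3 (w1*a11) (w1*a12) (w1*a13) (w2*a21) (w2*a22) (w2*a23) (w3*a31) (w3*a32) (w3*a33)
   = w1*w2*w3 * det3 a11 a12 a13 a21 a22 a23 a31 a32 a33"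
  unfolding det3_def by (simp add: algebra_simps)

lemma det3_KH:
  fixes K12 K13 K21 K23 K31 K32 L1 L2 L3 :: real
  shows "det3 (K12*L3 + K13*L2) (K12 + K13*L1) (K12*L1 + K13)
              (K21 + K23*L2) (K21*L3 + K23*L1) (K21*L2 + K23)
              (K31 + K32*L3) (K31*L3 + K32) (K31*L2 + K32*L1)
        = (K12*K23*K31 + K13*K32*K21) * (1 + 2*L1*L2*L3 - L1^2 - L2^2 - L3^2)"
  unfolding det3_def by (simp add: algebra_simps power2_eq_square)



lemma pd3:
  fixes d1 d2 d3 f1 f2 f3 y1 y2 y3 :: real
  assumes h1: "d1 > 0" and h2: "d1*d2 - f3^2 > 0"
    and h3: "d1*d2*d3 + 2*f1*f2*f3 - d1*f1^2 - d2*f2^2 - d3*f3^2 > 0"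
    and hy: "y1 \<noteq> 0 \<or> y2 \<noteq> 0 \<or> y3 \<noteq> 0"
  shows "d1*y1^2 + d2*y2^2 + d3*y3^2 + 2*f3*y1*y2 + 2*f2*y1*y3 + 2*f1*y2*y3 > 0"
proof -
  define m where "m = d1*d2 - f3^2"
  define dt where "dt = d1*d2*d3 + 2*f1*f2*f3 - d1*f1^2 - d2*f2^2 - d3*f3^2"
  define Q where "Q = d1*y1^2 + d2*y2^2 + d3*y3^2 + 2*f3*y1*y2 + 2*f2*y1*y3 + 2*f1*y2*y3"
  have id: "d1*m*Q = m*(d1*y1+f3*y2+f2*y3)^2 + (m*y2 + (d1*f1 - f2*f3)*y3)^2 + d1*dt*y3^2"
    unfolding m_def dt_def Q_def by (simp add: power2_eq_square algebra_simps)
  have m0: "m > 0" using h2 m_def by simp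
  have dt0: "dt > 0" using h3 dt_def by simp
  have "d1*m*Q > 0"
  proof (cases "y3 = 0")
    case False
    then have "d1*dt*y3^2 > 0" using h1 dt0 by simp
    then show ?thesis unfolding id using m0
      by (smt (verit) mult_nonneg_nonneg zero_le_power2)
  next
    case y3: True
    show ?thesis
    proof (cases "y2 = 0")
      case False
      then have "(m*y2 + (d1*f1 - f2*f3)*y3)^2 > 0" using y3 m0 by simp
      then show ?thesis unfolding id using m0 h1 dt0
        by (smt (verit) mult_nonneg_nonneg zero_le_power2)
    next
      case True
      then have "y1 \<noteq> 0" using y3 hy by simp
      then have "m*(d1*y1+f3*y2+f2*y3)^2 > 0" using y3 True m0 h1 by simp
      then show ?thesis unfolding id using m0 h1 dt0
        by (smt (verit) mult_nonneg_nonneg zero_le_power2)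
    qed
  qed
  then have "Q > 0" using h1 m0
    by (metis mult_pos_pos zero_less_mult_pos)
  then show ?thesis unfolding Q_def .
qed


lemma key_alg:
  fixes L1 L2 L3 c1 c2 c3 x1 x2 x3 :: real
  defines "K12 \<equiv> L1*c2 - c3" and "K13 \<equiv> L1*c3 - c2" and "K21 \<equiv> L2*c1 - c3"
    and "K23 \<equiv> L2*c3 - c1" and "K31 \<equiv> L3*c1 - c2" and "K32 \<equiv> L3*c2 - c1"
  defines "z1 \<equiv> (K12*x2 + K13*x3)/(L1^2-1)" and "z2 \<equiv> (K21*x1 + K23*x3)/(L2^2-1)"
    and "z3 \<equiv> (K31*x1 + K32*x2)/(L3^2-1)"
  assumes L1: "L1 > 1" and L2: "L2 > 1" and L3: "L3 > 1"
    and D: "1 + 2*L1*L2*L3 - L1^2 - L2^2 - L3^2 > 0"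
    and k: "K12 > 0" "K13 > 0" "K21 > 0" "K23 > 0" "K31 > 0" "K32 > 0"
    and x: "x1 \<noteq> 0 \<or> x2 \<noteq> 0 \<or> x3 \<noteq> 0"
  shows "x1*((L1^2-1)*z1 + (L3-L1*L2)*z2 + (L2-L1*L3)*z3)
       + x2*((L3-L1*L2)*z1 + (L2^2-1)*z2 + (L1-L2*L3)*z3)
       + x3*((L2-L1*L3)*z1 + (L1-L2*L3)*z2 + (L3^2-1)*z3) < 0"
proof -
  define D where "D = 1 + 2*L1*L2*L3 - L1^2 - L2^2 - L3^2"
  have D0: "D > 0" using D D_def by simp
  have l1: "L1^2 - 1 > 0" using L1 by (simp add: power2_eq_square) (smt (verit) mult_less_cancel_left1)
  have l2: "L2^2 - 1 > 0" using L2 by (simp add: power2_eq_square) (smt (verit) mult_less_cancel_left1)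
  have l3: "L3^2 - 1 > 0" using L3 by (simp add: power2_eq_square) (smt (verit) mult_less_cancel_left1)
  define w1 where "w1 = 1/(L1^2-1)"
  define w2 where "w2 = 1/(L2^2-1)"
  define w3 where "w3 = 1/(L3^2-1)"
  have w: "w1 > 0" "w2 > 0" "w3 > 0" using l1 l2 l3 w1_def w2_def w3_def by auto
  define y1 where "y1 = (L1^2-1)*x1 + (L3-L1*L2)*x2 + (L2-L1*L3)*x3"
  define y2 where "y2 = (L3-L1*L2)*x1 + (L2^2-1)*x2 + (L1-L2*L3)*x3"
  define y3 where "y3 = (L2-L1*L3)*x1 + (L1-L2*L3)*x2 + (L3^2-1)*x3"
  have e: "x1*((L1^2-1)*z1 + (L3-L1*L2)*z2 + (L2-L1*L3)*z3)
       + x2*((L3-L1*L2)*z1 + (L2^2-1)*z2 + (L1-L2*L3)*z3)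
       + x3*((L2-L1*L3)*z1 + (L1-L2*L3)*z2 + (L3^2-1)*z3) = y1*z1 + y2*z2 + y3*z3"
    unfolding y1_def y2_def y3_def by (simp add: algebra_simps)
  have hx1: "D*x1 = -(y1 + L3*y2 + L2*y3)"
    unfolding D_def y1_def y2_def y3_def by (simp add: algebra_simps power2_eq_square)
  have hx2: "D*x2 = -(L3*y1 + y2 + L1*y3)"
    unfolding D_def y1_def y2_def y3_def by (simp add: algebra_simps power2_eq_square)
  have hx3: "D*x3 = -(L2*y1 + L1*y2 + y3)"
    unfolding D_def y1_def y2_def y3_def by (simp add: algebra_simps power2_eq_square)
  define P11 where "P11 = K12*L3 + K13*L2"
  define P12 where "P12 = K12 + K13*L1"
  define P13 where "P13 = K12*L1 + K13"
  define P21 where "P21 = K21 + K23*L2"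
  define P22 where "P22 = K21*L3 + K23*L1"
  define P23 where "P23 = K21*L2 + K23"
  define P31 where "P31 = K31 + K32*L3"
  define P32 where "P32 = K31*L3 + K32"
  define P33 where "P33 = K31*L2 + K32*L1"
  define d1 where "d1 = w1*P11"
  define d2 where "d2 = w2*P22"
  define d3 where "d3 = w3*P33"
  have p12: "w1*P12 = c3" unfolding w1_def P12_def K12_def K13_def using l1
    by (simp add: field_simps power2_eq_square)
  have p13: "w1*P13 = c2" unfolding w1_def P13_def K12_def K13_def using l1
    by (simp add: field_simps power2_eq_square)
  have p21: "w2*P21 = c3" unfolding w2_def P21_def K21_def K23_def using l2
    by (simp add: field_simps power2_eq_square)
  have p23: "w2*P23 = c1" unfolding w2_def P23_def K21_def K23_def using l2
    by (simp add: field_simps power2_eq_square)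
  have p31: "w3*P31 = c2" unfolding w3_def P31_def K31_def K32_def using l3
    by (simp add: field_simps power2_eq_square)
  have p32: "w3*P32 = c1" unfolding w3_def P32_def K31_def K32_def using l3
    by (simp add: field_simps power2_eq_square)
  have hv1: "D*z1 = -(d1*y1 + c3*y2 + c2*y3)"
  proof -
    have "D*z1 = w1*(K12*(D*x2) + K13*(D*x3))" unfolding z1_def w1_def by (simp add: algebra_simps add_divide_distrib)
    also have "\<dots> = -(w1*P11*y1 + (w1*P12)*y2 + (w1*P13)*y3)"
      unfolding hx2 hx3 P11_def P12_def P13_def by (simp add: algebra_simps)
    finally show ?thesis unfolding p12 p13 d1_def .
  qed
  have hv2: "D*z2 = -(c3*y1 + d2*y2 + c1*y3)"
  proof -
    have "D*z2 = w2*(K21*(D*x1) + K23*(D*x3))" unfolding z2_def w2_def by (simp add: algebra_simps add_divide_distrib)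
    also have "\<dots> = -((w2*P21)*y1 + w2*P22*y2 + (w2*P23)*y3)"
      unfolding hx1 hx3 P21_def P22_def P23_def by (simp add: algebra_simps)
    finally show ?thesis unfolding p21 p23 d2_def .
  qed
  have hv3: "D*z3 = -(c2*y1 + c1*y2 + d3*y3)"
  proof -
    have "D*z3 = w3*(K31*(D*x1) + K32*(D*x2))" unfolding z3_def w3_def by (simp add: algebra_simps add_divide_distrib)
    also have "\<dots> = -((w3*P31)*y1 + (w3*P32)*y2 + w3*P33*y3)"
      unfolding hx1 hx2 P31_def P32_def P33_def by (simp add: algebra_simps)
    finally show ?thesis unfolding p31 p32 d3_def .
  qed
  define Q where "Q = d1*y1^2 + d2*y2^2 + d3*y3^2 + 2*c3*y1*y2 + 2*c2*y1*y3 + 2*c1*y2*y3"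
  have DQ: "D*(y1*z1 + y2*z2 + y3*z3) = -Q"
  proof -
    have "D*(y1*z1 + y2*z2 + y3*z3) = y1*(D*z1) + y2*(D*z2) + y3*(D*z3)" by (simp add: algebra_simps)
    also have "\<dots> = -Q" unfolding hv1 hv2 hv3 Q_def by (simp add: algebra_simps power2_eq_square)
    finally show ?thesis .
  qed
  have y: "y1 \<noteq> 0 \<or> y2 \<noteq> 0 \<or> y3 \<noteq> 0"
  proof (rule ccontr)
    assume "\<not> ?thesis"
    then have "D*x1 = 0" "D*x2 = 0" "D*x3 = 0" using hx1 hx2 hx3 by auto
    then show False using D0 x by auto
  qed
  have dpos: "d1 > 0" "d2 > 0" "d3 > 0"
    unfolding d1_def d2_def d3_def P11_def P22_def P33_def using w k L1 L2 L3 by (auto intro!: mult_pos_pos add_pos_pos)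
  have detK: "K12*K23*K31 + K13*K32*K21 > 0" using k by (simp add: add_pos_pos)
  have det: "d1*d2*d3 + 2*c1*c2*c3 - d1*c1^2 - d2*c2^2 - d3*c3^2 > 0"
  proof -
    have "d1*d2*d3 + 2*c1*c2*c3 - d1*c1^2 - d2*c2^2 - d3*c3^2 = det3 d1 c3 c2 c3 d2 c1 c2 c1 d3"
      unfolding det3_def by (simp add: algebra_simps power2_eq_square)
    also have "\<dots> = det3 (w1*P11) (w1*P12) (w1*P13) (w2*P21) (w2*P22) (w2*P23) (w3*P31) (w3*P32) (w3*P33)"
      unfolding p12 p13 p21 p23 p31 p32 d1_def d2_def d3_def ..
    also have "\<dots> = w1*w2*w3 * ((K12*K23*K31 + K13*K32*K21) * D)"
      unfolding det3_scale P11_def P12_def P13_def P21_def P22_def P23_def P31_def P32_def P33_def det3_KH D_def ..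
    finally show ?thesis using w detK D0 by simp
  qed
  have Qpos: "Q > 0"
  proof -
    have c12: "L1*L3 - L2 \<ge> 0 \<or> L2*L3 - L1 \<ge> 0"
    proof (rule ccontr)
      assume "\<not> ?thesis"
      then have "L1*L3 < L2" "L2*L3 < L1" by auto
      moreover have "L1*L3 > L1" "L2*L3 > L2" using L1 L2 L3 by auto
      ultimately show False by linarith
    qed
    have c13: "L1*L2 - L3 \<ge> 0 \<or> L2*L3 - L1 \<ge> 0"
    proof (rule ccontr)
      assume "\<not> ?thesis"
      then have "L1*L2 < L3" "L2*L3 < L1" by auto
      moreover have "L1*L2 > L1" "L3*L2 > L3" using L1 L2 L3 by auto
      ultimately show False by (simp add: mult.commute)
    qed
    have c23: "L1*L2 - L3 \<ge> 0 \<or> L1*L3 - L2 \<ge> 0"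
    proof (rule ccontr)
      assume "\<not> ?thesis"
      then have "L1*L2 < L3" "L1*L3 < L2" by auto
      moreover have "L1*L2 > L2" "L1*L3 > L3" using L1 L2 L3 by auto
      ultimately show False by linarith
    qed
    consider (a) "L2*L3 - L1 \<ge> 0" "L1*L3 - L2 \<ge> 0" | (b) "L2*L3 - L1 < 0" | (c) "L1*L3 - L2 < 0"
      by linarith
    then show ?thesis
    proof cases
      case a
      have br: "P11*P22 - P12*P21 = K12*K21*(L3^2-1) + K12*K23*(L1*L3-L2) + K13*K21*(L2*L3-L1)"
        unfolding P11_def P22_def P12_def P21_def by (simp add: algebra_simps power2_eq_square)
      have "K12*K21*(L3^2-1) > 0" using k l3 by simp
      moreover have "K12*K23*(L1*L3-L2) \<ge> 0" "K13*K21*(L2*L3-L1) \<ge> 0" using k a by simp_all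
      ultimately have "P11*P22 - P12*P21 > 0" unfolding br by linarith
      moreover have "d1*d2 - c3^2 = w1*w2*(P11*P22 - P12*P21)"
      proof -
        have "c3^2 = (w1*P12)*(w2*P21)" using p12 p21 by (simp add: power2_eq_square)
        then show ?thesis unfolding d1_def d2_def by (simp add: algebra_simps)
      qed
      ultimately have m: "d1*d2 - c3^2 > 0" using w by simp
      show ?thesis using pd3[OF dpos(1) m det y] unfolding Q_def .
    next
      case b
      then have b2: "L1*L2 - L3 \<ge> 0" "L1*L3 - L2 \<ge> 0" using c13 c12 by auto
      have br: "P22*P33 - P23*P32 = K23*K32*(L1^2-1) + K23*K31*(L2*L1-L3) + K21*K32*(L3*L1-L2)"
        unfolding P22_def P33_def P23_def P32_def by (simp add: algebra_simps power2_eq_square)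
      have "K23*K32*(L1^2-1) > 0" using k l1 by simp
      moreover have "K23*K31*(L2*L1-L3) \<ge> 0" "K21*K32*(L3*L1-L2) \<ge> 0" using k b2
        by (simp_all add: mult.commute)
      ultimately have "P22*P33 - P23*P32 > 0" unfolding br by linarith
      moreover have "d2*d3 - c1^2 = w2*w3*(P22*P33 - P23*P32)"
      proof -
        have "c1^2 = (w2*P23)*(w3*P32)" using p23 p32 by (simp add: power2_eq_square)
        then show ?thesis unfolding d2_def d3_def by (simp add: algebra_simps)
      qed
      ultimately have m: "d2*d3 - c1^2 > 0" using w by simp
      have det': "d2*d3*d1 + 2*c2*c3*c1 - d2*c2^2 - d3*c3^2 - d1*c1^2 > 0"
        using det by (simp add: algebra_simps)
      have y': "y2 \<noteq> 0 \<or> y3 \<noteq> 0 \<or> y1 \<noteq> 0" using y by auto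
      show ?thesis using pd3[OF dpos(2) m det' y'] unfolding Q_def by (simp add: algebra_simps)
    next
      case c
      then have b2: "L1*L2 - L3 \<ge> 0" "L2*L3 - L1 \<ge> 0" using c12 c23 by auto
      have br: "P33*P11 - P31*P13 = K31*K13*(L2^2-1) + K31*K12*(L3*L2-L1) + K32*K13*(L1*L2-L3)"
        unfolding P11_def P33_def P13_def P31_def by (simp add: algebra_simps power2_eq_square)
      have "K31*K13*(L2^2-1) > 0" using k l2 by simp
      moreover have "K31*K12*(L3*L2-L1) \<ge> 0" "K32*K13*(L1*L2-L3) \<ge> 0" using k b2
        by (simp_all add: mult.commute)
      ultimately have "P33*P11 - P31*P13 > 0" unfolding br by linarith
      moreover have "d3*d1 - c2^2 = w3*w1*(P33*P11 - P31*P13)"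
      proof -
        have "c2^2 = (w3*P31)*(w1*P13)" using p31 p13 by (simp add: power2_eq_square)
        then show ?thesis unfolding d3_def d1_def by (simp add: algebra_simps)
      qed
      ultimately have m: "d3*d1 - c2^2 > 0" using w by simp
      have det': "d3*d1*d2 + 2*c3*c1*c2 - d3*c3^2 - d1*c1^2 - d2*c2^2 > 0"
        using det by (simp add: algebra_simps)
      have y': "y3 \<noteq> 0 \<or> y1 \<noteq> 0 \<or> y2 \<noteq> 0" using y by auto
      show ?thesis using pd3[OF dpos(3) m det' y'] unfolding Q_def by (simp add: algebra_simps)
    qed
  qed
  have "D*(y1*z1 + y2*z2 + y3*z3) < 0" using DQ Qpos by simp
  then have "y1*z1 + y2*z2 + y3*z3 < 0" using D0 by (simp add: mult_less_0_iff)
  then show ?thesis unfolding e .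
qed



lemma has_derivative_vec_nth' [derivative_intros]:
  "(g has_derivative g') F \<Longrightarrow> ((\<lambda>x. g x $ i) has_derivative (\<lambda>x. g' x $ i)) F"
  by (rule bounded_linear.has_derivative[OF bounded_linear_vec_nth])

lemma radius_alt: "x < 0 \<Longrightarrow> radius x = ln ((1 + exp x)/(1 - exp x))"
  by (simp add: radius_def artanh_def)

lemma radius_pos: "x < 0 \<Longrightarrow> radius x > 0"
proof -
  assume x: "x < 0"
  have t: "exp x < 1" "exp x > 0" using x by auto
  have "(1 + exp x)/(1 - exp x) > 1" using t by (simp add: field_simps)
  then show ?thesis using radius_alt[OF x] by simp
qed

lemma aux_sinh: "0 < t \<Longrightarrow> t < (1::real) \<Longrightarrow> ((1+t)/(1-t) - inverse ((1+t)/(1-t)))/2 = 2*t/(1-t^2)"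
proof -
  assume t: "0 < t" "t < 1"
  have a: "1 - t \<noteq> 0" "1 + t \<noteq> 0" "1 - t^2 \<noteq> 0" using t by (auto simp: power2_eq_square)
     (smt (verit) mult_less_cancel_left1)
  have "1 - t^2 = (1-t)*(1+t)" by (simp add: algebra_simps power2_eq_square)
  then show ?thesis using a by (simp add: field_simps inverse_eq_divide)
qed

lemma sinh_radius: "x < 0 \<Longrightarrow> sinh (radius x) = 2*exp x/(1 - (exp x)^2)"
proof -
  assume x: "x < 0"
  have t: "exp x < 1" "exp x > 0" using x by auto
  have p: "(1 + exp x)/(1 - exp x) > 0" using t by (intro divide_pos_pos) (auto intro: add_pos_pos)
  show ?thesis unfolding radius_alt[OF x] sinh_ln_real[OF p] by (rule aux_sinh) (use t in auto)
qed

lemma radius_deriv: "x < 0 \<Longrightarrow> (radius has_real_derivative sinh (radius x)) (at x)"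
proof -
  assume x: "x < 0"
  have t: "exp x < 1" "exp x > 0" using x by auto
  have a: "(artanh has_real_derivative (1 / (1 - (exp x)^2))) (at (exp x))"
    by (rule artanh_real_has_field_derivative) (use t in auto)
  have "((\<lambda>x. 2 * artanh (exp x)) has_real_derivative 2 * (1 / (1 - (exp x)^2) * exp x)) (at x)"
    by (intro DERIV_cmult DERIV_chain2[of artanh "1 / (1 - (exp x)^2)" exp x, OF a] DERIV_exp)
  moreover have "2 * (1 / (1 - (exp x)^2) * exp x) = sinh (radius x)"
    unfolding sinh_radius[OF x] by simp
  ultimately show ?thesis unfolding radius_def[abs_def] by simp
qed

lemma DERIV_cosh_real: "(cosh has_real_derivative sinh x) (at (x::real))"
  using has_field_derivative_cosh[OF DERIV_ident] by simp
lemma DERIV_sinh_real: "(sinh has_real_derivative cosh x) (at (x::real))"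
  using has_field_derivative_sinh[OF DERIV_ident] by simp
lemmas has_derivative_cosh' = DERIV_cosh_real[THEN DERIV_compose_FDERIV]
lemmas has_derivative_sinh' = DERIV_sinh_real[THEN DERIV_compose_FDERIV]

lemmas has_derivative_radius = radius_deriv[THEN DERIV_compose_FDERIV]

lemma side_deriv:
  fixes u :: "real^3" and I :: real and j k :: 3
  assumes u2: "u$j < 0" and u3: "u$k < 0" and I: "I \<ge> 0"
  defines "c2 \<equiv> cosh (radius (u$j))" and "c3 \<equiv> cosh (radius (u$k))"
    and "t2 \<equiv> sinh (radius (u$j))" and "t3 \<equiv> sinh (radius (u$k))"
  defines "L \<equiv> c2*c3 + I*t2*t3"
  shows "((\<lambda>u. side_len I (radius (u$j)) (radius (u$k))) has_derivative
          (\<lambda>h. (t2*(t2*c3 + I*c2*t3)*h$j + t3*(t3*c2 + I*c3*t2)*h$k) / sqrt (L^2 - 1))) (at u)"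
proof -
  have r: "radius (u$j) > 0" "radius (u$k) > 0" using radius_pos u2 u3 by auto
  have s: "t2 > 0" "t3 > 0" using r t2_def t3_def by auto
  have c: "c2 > 1" "c3 > 1" using r c2_def c3_def cosh_real_ge_1
    by (metis cosh_real_one_iff less_irrefl order_le_less)+
  have L1: "L > 1"
  proof -
    have "c2*c3 > 1" using c by (simp add: less_1_mult)
    moreover have "I*t2*t3 \<ge> 0" using I s by simp
    ultimately show ?thesis unfolding L_def by linarith
  qed
  have ct2: "c2^2 = 1 + t2^2" unfolding c2_def t2_def by (simp add: cosh_square_eq)
  have ct3: "c3^2 = 1 + t3^2" unfolding c3_def t3_def by (simp add: cosh_square_eq)
  have d2: "((\<lambda>u. radius (u$j)) has_derivative (\<lambda>h. h$j * t2)) (at u)"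
    unfolding t2_def using has_derivative_radius[where g="\<lambda>u. u$j" and x=u, OF _ has_derivative_vec_nth'[OF has_derivative_ident]] u2 by simp
  have d3: "((\<lambda>u. radius (u$k)) has_derivative (\<lambda>h. h$k * t3)) (at u)"
    unfolding t3_def using has_derivative_radius[where g="\<lambda>u. u$k" and x=u, OF _ has_derivative_vec_nth'[OF has_derivative_ident]] u3 by simp
  have dg: "((\<lambda>u. cosh (radius (u$j))*cosh (radius (u$k)) + I * sinh (radius (u$j)) * sinh (radius (u$k)))
      has_derivative (\<lambda>h. t2*(t2*c3 + I*c2*t3)*h$j + t3*(t3*c2 + I*c3*t2)*h$k)) (at u)"
    apply (rule has_derivative_eq_rhs)
     apply (rule has_derivative_add has_derivative_mult has_derivative_const has_derivative_cosh' has_derivative_sinh' d2 d3)+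
    apply (rule ext)
    apply (simp add: c2_def c3_def t2_def t3_def algebra_simps)
    done
  have Lu: "cosh (radius (u$j))*cosh (radius (u$k)) + I * sinh (radius (u$j)) * sinh (radius (u$k)) = L"
    unfolding L_def c2_def c3_def t2_def t3_def ..
  define g where "g = (\<lambda>u::real^3. cosh (radius (u$j))*cosh (radius (u$k)) + I * sinh (radius (u$j)) * sinh (radius (u$k)))"
  have a: "(arcosh has_real_derivative 1 / sqrt (L^2 - 1)) (at (g u))"
    unfolding g_def using Lu arcosh_real_has_field_derivative[of L UNIV] L1 by simp
  have da: "((\<lambda>u. arcosh (g u))
      has_derivative (\<lambda>h. (t2*(t2*c3 + I*c2*t3)*h$j + t3*(t3*c2 + I*c3*t2)*h$k) * (1 / sqrt (L^2 - 1)))) (at u)"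
    using DERIV_compose_FDERIV[OF a dg[folded g_def]] .
  show ?thesis unfolding side_len_def using da unfolding g_def by (simp add: field_simps)
qed



lemma hyp_angle_deriv:
  fixes l :: "real^3" and i j k :: 3
  assumes lj: "l$j > 0" and lk: "l$k > 0"
  defines "Ca \<equiv> cosh (l$i)" and "Cb \<equiv> cosh (l$j)" and "Cc \<equiv> cosh (l$k)"
    and "Sa \<equiv> sinh (l$i)" and "Sb \<equiv> sinh (l$j)" and "Sc \<equiv> sinh (l$k)"
  defines "DD \<equiv> 1 + 2*Ca*Cb*Cc - Ca^2 - Cb^2 - Cc^2"
  assumes DD: "DD > 0"
  shows "((\<lambda>l. hyp_angle (l$i) (l$j) (l$k)) has_derivative
     (\<lambda>h. (Sa*h$i + (Cc - Ca*Cb)/Sb*h$j + (Cb - Ca*Cc)/Sc*h$k)/sqrt DD)) (at l)"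
proof -
  have sb: "Sb > 0" and sc: "Sc > 0" using lj lk Sb_def Sc_def by auto
  have ca: "Ca^2 = 1 + Sa^2" unfolding Ca_def Sa_def by (simp add: cosh_square_eq)
  have cb: "Cb^2 = 1 + Sb^2" unfolding Cb_def Sb_def by (simp add: cosh_square_eq)
  have cc: "Cc^2 = 1 + Sc^2" unfolding Cc_def Sc_def by (simp add: cosh_square_eq)
  define N where "N = (\<lambda>l::real^3. (cosh (l$j)*cosh (l$k) - cosh (l$i))/(sinh (l$j) * sinh (l$k)))"
  have vi: "((\<lambda>u::real^3. u$i) has_derivative (\<lambda>h. h$i)) (at l)" for i
    by (rule has_derivative_vec_nth'[OF has_derivative_ident])
  have dN: "(N has_derivative (\<lambda>h. -(Sa*h$i + (Cc - Ca*Cb)/Sb*h$j + (Cb - Ca*Cc)/Sc*h$k)/(Sb * Sc))) (at l)"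
    unfolding N_def
    apply (rule has_derivative_eq_rhs)
     apply (rule has_derivative_divide has_derivative_diff has_derivative_mult has_derivative_cosh' has_derivative_sinh' vi)+
    using sb sc apply (simp add: Sb_def Sc_def)
    apply (rule ext)
    apply (simp add: Ca_def[symmetric] Cb_def[symmetric] Cc_def[symmetric] Sa_def[symmetric] Sb_def[symmetric] Sc_def[symmetric])
    using sb sc apply (simp add: field_simps)
    using cb cc by algebra
  have Nl: "N l = (Cb*Cc - Ca)/(Sb * Sc)" unfolding N_def Ca_def Cb_def Cc_def Sb_def Sc_def by simp
  have om0: "(Sb * Sc)^2 - (Cb*Cc - Ca)^2 = DD" unfolding DD_def using cb cc by algebra
  have om: "1 - (N l)^2 = DD/(Sb * Sc)^2" unfolding Nl om0[symmetric] using sb sc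
    by (simp add: field_simps)
  have "DD/(Sb * Sc)^2 > 0" using DD sb sc by simp
  then have "(N l)^2 < 1" using om by linarith
  then have rng: "-1 < N l" "N l < 1" by (auto simp: abs_square_less_1 abs_less_iff)
  have sq: "sqrt (1 - (N l)^2) = sqrt DD/(Sb * Sc)" unfolding om using sb sc
    by (simp add: real_sqrt_divide)
  have darc: "((\<lambda>l. arccos (N l)) has_derivative
     (\<lambda>h. -(Sa*h$i + (Cc - Ca*Cb)/Sb*h$j + (Cb - Ca*Cc)/Sc*h$k)/(Sb * Sc) * inverse (- sqrt (1 - (N l)^2)))) (at l)"
    by (rule has_derivative_arccos[OF rng dN])
  have eqf: "(\<lambda>l. hyp_angle (l$i) (l$j) (l$k)) = (\<lambda>l. arccos (N l))"
    unfolding hyp_angle_def N_def by simp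
  show ?thesis unfolding eqf
    apply (rule has_derivative_eq_rhs[OF darc])
    apply (rule ext)
    unfolding sq using sb sc DD by (simp add: field_simps)
qed



lemma basis3: "b \<in> (Basis :: (real^3) set) \<Longrightarrow> \<exists>j. b = axis j 1"
  unfolding Basis_vec_def by auto
lemma has_derivative_vec3:
  fixes f :: "'a::real_normed_vector \<Rightarrow> real^3"
  assumes d: "\<And>i. ((\<lambda>x. f x $ i) has_derivative (\<lambda>h. f' h $ i)) (at a)"
  shows "(f has_derivative f') (at a)"
proof -
  have "\<forall>b\<in>Basis. ((\<lambda>x. f x \<bullet> b) has_derivative (\<lambda>x. f' x \<bullet> b)) (at a)"
  proof
    fix b :: "real^3" assume "b \<in> Basis"
    then obtain j where b: "b = axis j 1" using basis3 by blast
    show "((\<lambda>x. f x \<bullet> b) has_derivative (\<lambda>x. f' x \<bullet> b)) (at a)"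
      unfolding b inner_axis using d[of j] by simp
  qed
  then show ?thesis using has_derivative_componentwise_within[of f f' a UNIV] by simp
qed

lemma D_pos:
  fixes a b c :: real
  assumes "a \<ge> 0" "b \<ge> 0" "c \<ge> 0" "a < b + c" "b < c + a" "c < a + b"
  shows "1 + 2*cosh a*cosh b*cosh c - (cosh a)^2 - (cosh b)^2 - (cosh c)^2 > 0"
proof -
  have e: "1 + 2*cosh a*cosh b*cosh c - (cosh a)^2 - (cosh b)^2 - (cosh c)^2
      = (cosh (b+c) - cosh a)*(cosh a - cosh (b-c))"
  proof -
    have "(cosh (b+c) - cosh a)*(cosh a - cosh (b-c)) = (sinh b * sinh c)^2 - (cosh a - cosh b * cosh c)^2"
      unfolding cosh_add cosh_diff by (simp add: algebra_simps power2_eq_square)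
    also have "\<dots> = ((cosh b)^2 - 1)*((cosh c)^2 - 1) - (cosh a - cosh b * cosh c)^2"
      by (simp add: power_mult_distrib sinh_square_eq)
    finally show ?thesis by (simp add: algebra_simps power2_eq_square)
  qed
  have 1: "cosh (b+c) > cosh a" using assms by (simp add: cosh_real_nonneg_less_iff)
  have "cosh (b-c) = cosh \<bar>b-c\<bar>" by simp
  moreover have "cosh \<bar>b-c\<bar> < cosh a" using assms by (subst cosh_real_nonneg_less_iff) auto
  ultimately have 2: "cosh a > cosh (b-c)" by simp
  show ?thesis unfolding e using 1 2 by simp
qed


lemma A_eq_K:
  fixes c2 c3 t2 t3 I :: real
  assumes "c2^2 = 1 + t2^2"
  shows "t2*(t2*c3 + I*c2*t3) = (c2*c3 + I*t2*t3)*c2 - c3"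
proof -
  have "(c2*c3 + I*t2*t3)*c2 - c3 - t2*(t2*c3 + I*c2*t3) = c3*(c2^2 - 1 - t2^2)"
    by (simp add: algebra_simps power2_eq_square)
  then show ?thesis using assms by simp
qed
theorem lemma3p4:
  fixes I12 I23 I31 :: real and u :: "real^3"
  assumes "I12 \<ge> 0" and "I23 \<ge> 0" and "I31 \<ge> 0"
    and "u \<in> U_H I12 I23 I31"
  shows "\<exists>J :: real^3^3. (angles I12 I23 I31 has_derivative (\<lambda>h. J *v h)) (at u)
           \<and> neg_definite J"
proof -
  note I = assms(1-3)
  have u: "u$1 < 0" "u$2 < 0" "u$3 < 0" using assms(4) unfolding U_H_def by simp_all
  define c1 where "c1 = cosh (radius (u$1))"
  define c2 where "c2 = cosh (radius (u$2))"
  define c3 where "c3 = cosh (radius (u$3))"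
  define t1 where "t1 = sinh (radius (u$1))"
  define t2 where "t2 = sinh (radius (u$2))"
  define t3 where "t3 = sinh (radius (u$3))"
  define L1 where "L1 = c2*c3 + I23*t2*t3"
  define L2 where "L2 = c3*c1 + I31*t3*t1"
  define L3 where "L3 = c1*c2 + I12*t1*t2"
  have r: "radius (u$1) > 0" "radius (u$2) > 0" "radius (u$3) > 0" using radius_pos u by auto
  have t: "t1 > 0" "t2 > 0" "t3 > 0" using r t1_def t2_def t3_def by auto
  have c: "c1 > 1" "c2 > 1" "c3 > 1" using r c1_def c2_def c3_def cosh_real_ge_1
    by (metis cosh_real_one_iff less_irrefl order_le_less)+
  have ct: "c1^2 = 1 + t1^2" "c2^2 = 1 + t2^2" "c3^2 = 1 + t3^2"
    unfolding c1_def c2_def c3_def t1_def t2_def t3_def by (simp_all add: cosh_square_eq)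
  have Lg1: "L1 > 1" "L2 > 1" "L3 > 1"
  proof -
    have "c2*c3 > 1" "c3*c1 > 1" "c1*c2 > 1" using c by (simp_all add: less_1_mult)
    moreover have "I23*t2*t3 \<ge> 0" "I31*t3*t1 \<ge> 0" "I12*t1*t2 \<ge> 0" using I t by simp_all
    ultimately show "L1 > 1" "L2 > 1" "L3 > 1" unfolding L1_def L2_def L3_def by linarith+
  qed
  define l where "l = lengths I12 I23 I31 u"
  have l1: "l$1 = arcosh L1" unfolding l_def lengths_def side_len_def L1_def c2_def c3_def t2_def t3_def by simp
  have l2: "l$2 = arcosh L2" unfolding l_def lengths_def side_len_def L2_def c1_def c3_def t1_def t3_def by simp
  have l3: "l$3 = arcosh L3" unfolding l_def lengths_def side_len_def L3_def c1_def c2_def t1_def t2_def by simp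
  have Cl: "cosh (l$1) = L1" "cosh (l$2) = L2" "cosh (l$3) = L3" using l1 l2 l3 Lg1 by simp_all
  define S1 where "S1 = sqrt (L1^2 - 1)"
  define S2 where "S2 = sqrt (L2^2 - 1)"
  define S3 where "S3 = sqrt (L3^2 - 1)"
  have Sl: "sinh (l$1) = S1" "sinh (l$2) = S2" "sinh (l$3) = S3"
    using l1 l2 l3 Lg1 sinh_arcosh_real S1_def S2_def S3_def by simp_all
  have lpos: "l$1 > 0" "l$2 > 0" "l$3 > 0" using l1 l2 l3 Lg1 by simp_all
  have tri: "l$1 < l$2 + l$3" "l$2 < l$3 + l$1" "l$3 < l$1 + l$2"
    using assms(4) unfolding U_H_def l_def Let_def by simp_all
  define D where "D = 1 + 2*L1*L2*L3 - L1^2 - L2^2 - L3^2"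
  have D0: "D > 0" using D_pos[of "l$1" "l$2" "l$3"] lpos tri Cl unfolding D_def by simp
  define A12 where "A12 = t2*(t2*c3 + I23*c2*t3)"
  define A13 where "A13 = t3*(t3*c2 + I23*c3*t2)"
  define A21 where "A21 = t1*(t1*c3 + I31*c1*t3)"
  define A23 where "A23 = t3*(t3*c1 + I31*c3*t1)"
  define A31 where "A31 = t1*(t1*c2 + I12*c1*t2)"
  define A32 where "A32 = t2*(t2*c1 + I12*c2*t1)"
  define Ml :: "real^3^3" where "Ml = vector [vector [0, A12/S1, A13/S1], vector [A21/S2, 0, A23/S2],
      vector [A31/S3, A32/S3, 0]]"
  have mv: "\<And>(M::real^3^3) h i. (M *v h) $ i = M$i$1 * h$1 + M$i$2 * h$2 + M$i$3 * h$3"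
    by (simp add: matrix_vector_mult_def sum_3)
  have dl: "(lengths I12 I23 I31 has_derivative (\<lambda>h. Ml *v h)) (at u)"
  proof (rule has_derivative_vec3)
    fix i :: 3
    have d1: "((\<lambda>u. lengths I12 I23 I31 u $ 1) has_derivative (\<lambda>h. (Ml *v h) $ 1)) (at u)"
    proof -
      have "((\<lambda>u. side_len I23 (radius (u$2)) (radius (u$3))) has_derivative (\<lambda>h. (A12*h$2 + A13*h$3)/S1)) (at u)"
        using side_deriv[OF u(2) u(3) I(2)] unfolding A12_def A13_def S1_def L1_def c2_def c3_def t2_def t3_def .
      then show ?thesis unfolding mv by (simp add: lengths_def Ml_def add_divide_distrib)
    qed
    have d2: "((\<lambda>u. lengths I12 I23 I31 u $ 2) has_derivative (\<lambda>h. (Ml *v h) $ 2)) (at u)"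
    proof -
      have "((\<lambda>u. side_len I31 (radius (u$3)) (radius (u$1))) has_derivative (\<lambda>h. (A23*h$3 + A21*h$1)/S2)) (at u)"
        using side_deriv[OF u(3) u(1) I(3)] unfolding A23_def A21_def S2_def L2_def c1_def c3_def t1_def t3_def .
      then show ?thesis unfolding mv by (simp add: lengths_def Ml_def add_divide_distrib add.commute)
    qed
    have d3: "((\<lambda>u. lengths I12 I23 I31 u $ 3) has_derivative (\<lambda>h. (Ml *v h) $ 3)) (at u)"
    proof -
      have "((\<lambda>u. side_len I12 (radius (u$1)) (radius (u$2))) has_derivative (\<lambda>h. (A31*h$1 + A32*h$2)/S3)) (at u)"
        using side_deriv[OF u(1) u(2) I(1)] unfolding A31_def A32_def S3_def L3_def c1_def c2_def t1_def t2_def .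
      then show ?thesis unfolding mv by (simp add: lengths_def Ml_def add_divide_distrib)
    qed
    show "((\<lambda>u. lengths I12 I23 I31 u $ i) has_derivative (\<lambda>h. (Ml *v h) $ i)) (at u)"
      using exhaust_3[of i] d1 d2 d3 by auto
  qed
  define sD where "sD = sqrt D"
  define Phi :: "real^3 \<Rightarrow> real^3" where
    "Phi = (\<lambda>l. vector [hyp_angle (l$1) (l$2) (l$3), hyp_angle (l$2) (l$3) (l$1), hyp_angle (l$3) (l$1) (l$2)])"
  define MP :: "real^3^3" where "MP = vector [
      vector [S1/sD, (L3 - L1*L2)/S2/sD, (L2 - L1*L3)/S3/sD],
      vector [(L3 - L2*L1)/S1/sD, S2/sD, (L1 - L2*L3)/S3/sD],
      vector [(L2 - L3*L1)/S1/sD, (L1 - L3*L2)/S2/sD, S3/sD]]"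
  have Dp: "1 + 2*L1*L2*L3 - L1^2 - L2^2 - L3^2 = D"
      "1 + 2*L2*L3*L1 - L2^2 - L3^2 - L1^2 = D"
      "1 + 2*L3*L1*L2 - L3^2 - L1^2 - L2^2 = D" unfolding D_def by (simp_all add: algebra_simps)
  have dphi: "(Phi has_derivative (\<lambda>h. MP *v h)) (at l)"
  proof (rule has_derivative_vec3)
    fix i :: 3
    have d1: "((\<lambda>l. Phi l $ 1) has_derivative (\<lambda>h. (MP *v h) $ 1)) (at l)"
    proof -
      have "((\<lambda>l. hyp_angle (l$1) (l$2) (l$3)) has_derivative
         (\<lambda>h. (S1*h$1 + (L3 - L1*L2)/S2*h$2 + (L2 - L1*L3)/S3*h$3)/sD)) (at l)"
        using hyp_angle_deriv[of l 2 3 1] lpos D0 unfolding Cl Sl Dp sD_def by simp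
      then show ?thesis unfolding mv by (simp add: Phi_def MP_def add_divide_distrib)
    qed
    have d2: "((\<lambda>l. Phi l $ 2) has_derivative (\<lambda>h. (MP *v h) $ 2)) (at l)"
    proof -
      have "((\<lambda>l. hyp_angle (l$2) (l$3) (l$1)) has_derivative
         (\<lambda>h. (S2*h$2 + (L1 - L2*L3)/S3*h$3 + (L3 - L2*L1)/S1*h$1)/sD)) (at l)"
        using hyp_angle_deriv[of l 3 1 2] lpos D0 unfolding Cl Sl Dp sD_def by simp
      then show ?thesis unfolding mv by (simp add: Phi_def MP_def add_divide_distrib algebra_simps)
    qed
    have d3: "((\<lambda>l. Phi l $ 3) has_derivative (\<lambda>h. (MP *v h) $ 3)) (at l)"
    proof -
      have "((\<lambda>l. hyp_angle (l$3) (l$1) (l$2)) has_derivative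
         (\<lambda>h. (S3*h$3 + (L2 - L3*L1)/S1*h$1 + (L1 - L3*L2)/S2*h$2)/sD)) (at l)"
        using hyp_angle_deriv[of l 1 2 3] lpos D0 unfolding Cl Sl Dp sD_def by simp
      then show ?thesis unfolding mv by (simp add: Phi_def MP_def add_divide_distrib algebra_simps)
    qed
    show "((\<lambda>l. Phi l $ i) has_derivative (\<lambda>h. (MP *v h) $ i)) (at l)"
      using exhaust_3[of i] d1 d2 d3 by auto
  qed
  have angd: "(angles I12 I23 I31 has_derivative (\<lambda>h. (MP ** Ml) *v h)) (at u)"
  proof -
    have e: "angles I12 I23 I31 = (\<lambda>u. Phi (lengths I12 I23 I31 u))"
      by (rule ext) (simp add: angles_def Phi_def Let_def)
    have "((\<lambda>u. Phi (lengths I12 I23 I31 u)) has_derivative (\<lambda>h. MP *v (Ml *v h))) (at u)"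
      using has_derivative_compose[OF dl dphi[unfolded l_def]] .
    then show ?thesis unfolding e by (simp add: matrix_vector_mul_assoc)
  qed
  have Kd: "A12 = L1*c2 - c3" "A13 = L1*c3 - c2" "A21 = L2*c1 - c3" "A23 = L2*c3 - c1"
      "A31 = L3*c1 - c2" "A32 = L3*c2 - c1"
  proof -
    show "A12 = L1*c2 - c3" unfolding A12_def L1_def using A_eq_K[OF ct(2), of c3 I23 t3] .
    show "A13 = L1*c3 - c2" unfolding A13_def L1_def using A_eq_K[OF ct(3), of c2 I23 t2] by (simp add: algebra_simps)
    show "A21 = L2*c1 - c3" unfolding A21_def L2_def using A_eq_K[OF ct(1), of c3 I31 t3] by (simp add: algebra_simps)
    show "A23 = L2*c3 - c1" unfolding A23_def L2_def using A_eq_K[OF ct(3), of c1 I31 t1] by (simp add: algebra_simps)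
    show "A31 = L3*c1 - c2" unfolding A31_def L3_def using A_eq_K[OF ct(1), of c2 I12 t2] by (simp add: algebra_simps)
    show "A32 = L3*c2 - c1" unfolding A32_def L3_def using A_eq_K[OF ct(2), of c1 I12 t1] by (simp add: algebra_simps)
  qed
  have cpos: "c1 > 0" "c2 > 0" "c3 > 0" using c by auto
  have Ap: "A12 > 0" "A13 > 0" "A21 > 0" "A23 > 0" "A31 > 0" "A32 > 0"
    unfolding A12_def A13_def A21_def A23_def A31_def A32_def using t cpos I
    by (auto intro!: mult_pos_pos add_pos_nonneg mult_nonneg_nonneg)
  have Kp: "L1*c2 - c3 > 0" "L1*c3 - c2 > 0" "L2*c1 - c3 > 0" "L2*c3 - c1 > 0"
      "L3*c1 - c2 > 0" "L3*c2 - c1 > 0" using Ap unfolding Kd by auto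
  have l2p: "L1^2 - 1 > 0" "L2^2 - 1 > 0" "L3^2 - 1 > 0" using Lg1
    by (simp_all add: power2_eq_square) (smt (verit) mult_less_cancel_left1)+
  have Spos: "S1 > 0" "S2 > 0" "S3 > 0" unfolding S1_def S2_def S3_def using l2p by simp_all
  have SS: "S1*S1 = L1^2 - 1" "S2*S2 = L2^2 - 1" "S3*S3 = L3^2 - 1"
    unfolding S1_def S2_def S3_def using l2p by simp_all
  have sDp: "sD > 0" unfolding sD_def using D0 by simp
  show ?thesis
  proof (intro exI conjI)
    show "(angles I12 I23 I31 has_derivative (\<lambda>h. (MP ** Ml) *v h)) (at u)" by (rule angd)
    show "neg_definite (MP ** Ml)"
      unfolding neg_definite_def
    proof (intro allI impI)
      fix x :: "real^3" assume x0: "x \<noteq> 0"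
      have xne: "x$1 \<noteq> 0 \<or> x$2 \<noteq> 0 \<or> x$3 \<noteq> 0"
        using x0 by (metis exhaust_3 vec_eq_iff zero_index)
      define z1 where "z1 = ((L1*c2 - c3)*x$2 + (L1*c3 - c2)*x$3)/(L1^2-1)"
      define z2 where "z2 = ((L2*c1 - c3)*x$1 + (L2*c3 - c1)*x$3)/(L2^2-1)"
      define z3 where "z3 = ((L3*c1 - c2)*x$1 + (L3*c2 - c1)*x$2)/(L3^2-1)"
      define w where "w = Ml *v x"
      have w1: "w$1 = S1*z1" unfolding w_def mv z1_def Ml_def using Spos SS
        by (simp add: Kd field_simps)
      have w2: "w$2 = S2*z2" unfolding w_def mv z2_def Ml_def using Spos SS
        by (simp add: Kd field_simps)
      have w3: "w$3 = S3*z3" unfolding w_def mv z3_def Ml_def using Spos SS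
        by (simp add: Kd field_simps)
      have p1: "(MP *v w)$1 = ((L1^2-1)*z1 + (L3-L1*L2)*z2 + (L2-L1*L3)*z3)/sD"
        unfolding mv w1 w2 w3 MP_def using Spos SS sDp apply (simp add: field_simps)
        using SS(1) by algebra
      have p2: "(MP *v w)$2 = ((L3-L1*L2)*z1 + (L2^2-1)*z2 + (L1-L2*L3)*z3)/sD"
        unfolding mv w1 w2 w3 MP_def using Spos SS sDp apply (simp add: field_simps)
        using SS(2) by algebra
      have p3: "(MP *v w)$3 = ((L2-L1*L3)*z1 + (L1-L2*L3)*z2 + (L3^2-1)*z3)/sD"
        unfolding mv w1 w2 w3 MP_def using Spos SS sDp apply (simp add: field_simps)
        using SS(3) by algebra
      have key: "x$1*((L1^2-1)*z1 + (L3-L1*L2)*z2 + (L2-L1*L3)*z3)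
       + x$2*((L3-L1*L2)*z1 + (L2^2-1)*z2 + (L1-L2*L3)*z3)
       + x$3*((L2-L1*L3)*z1 + (L1-L2*L3)*z2 + (L3^2-1)*z3) < 0"
        unfolding z1_def z2_def z3_def
        by (rule key_alg) (use Lg1 D0 Kp xne in \<open>simp_all add: D_def\<close>)
      have "x \<bullet> ((MP ** Ml) *v x) = x$1 * (MP *v w)$1 + x$2 * (MP *v w)$2 + x$3 * (MP *v w)$3"
        unfolding w_def by (simp add: matrix_vector_mul_assoc[symmetric] inner_vec_def sum_3)
      also have "\<dots> = (x$1*((L1^2-1)*z1 + (L3-L1*L2)*z2 + (L2-L1*L3)*z3)
       + x$2*((L3-L1*L2)*z1 + (L2^2-1)*z2 + (L1-L2*L3)*z3)
       + x$3*((L2-L1*L3)*z1 + (L1-L2*L3)*z2 + (L3^2-1)*z3)) / sD"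
        unfolding p1 p2 p3 using sDp by (simp add: field_simps)
      finally show "x \<bullet> ((MP ** Ml) *v x) < 0" using key sDp by (simp add: divide_neg_pos)
    qed
  qed
qed


end
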